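(* Let $q\in(0,1)$ and let $W\in\mathbb{R}^{I\times I}$ be a nonnegative matrix with $W\mathbf{1}=\mathbf{1}$ and $\mathbf{1}^*W=\mathbf{1}^*$. Consider the Synchronous Asymmetric Gossip Algorithm: at each time $t$, every node $i\in I$ independently (of the other nodes and of the past) samples a node $j_i$ with probability $W_{i,j_i}$, and all nodes simultaneously update $x_i(t+1)=(1-q)x_i(t)+qx_{j_i}(t)$. Then for every $t\ge0$, $$\mathbb{E}[(\bar x(t)-\bar x(0))^2]\le\frac{q}{N(1-q)+q}V(x(0)).$$
   Context: $I$ is a finite set of $N$ nodes, $x(0)\in\mathbb{R}^I$ deterministic. $\mathbf{1}$ is the all-ones vector, $W^*$ the transpose. For $y\in\mathbb{R}^I$, $\bar y=\frac1N\sum_i y_i$ and $V(y)=\frac1N\sum_i(y_i-\bar y)^2$. *)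

theory Defs
  imports "HOL-Probability.Probability"
begin

text \<open>Nodes are the elements of a finite type 'i; N = CARD('i).\<close>

definition avg :: "('i::finite \<Rightarrow> real) \<Rightarrow> real" where
  "avg y = (\<Sum>i\<in>UNIV. y i) / real CARD('i)"

definition Var :: "('i::finite \<Rightarrow> real) \<Rightarrow> real" where
  "Var y = (\<Sum>i\<in>UNIV. (y i - avg y)^2) / real CARD('i)"

definition row_pmf :: "('i::finite \<Rightarrow> 'i \<Rightarrow> real) \<Rightarrow> 'i \<Rightarrow> 'i pmf" where
  "row_pmf W i = embed_pmf (W i)"

definition choice_pmf :: "('i::finite \<Rightarrow> 'i \<Rightarrow> real) \<Rightarrow> ('i \<Rightarrow> 'i) pmf" where
  "choice_pmf W = Pi_pmf UNIV undefined (row_pmf W)"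

definition sag_update :: "real \<Rightarrow> ('i \<Rightarrow> real) \<Rightarrow> ('i \<Rightarrow> 'i) \<Rightarrow> ('i \<Rightarrow> real)" where
  "sag_update q x J = (\<lambda>i. (1 - q) * x i + q * x (J i))"

primrec sag_dist :: "real \<Rightarrow> ('i::finite \<Rightarrow> 'i \<Rightarrow> real) \<Rightarrow> ('i \<Rightarrow> real) \<Rightarrow> nat \<Rightarrow> ('i \<Rightarrow> real) pmf" where
  "sag_dist q W x0 0 = return_pmf x0"
| "sag_dist q W x0 (Suc t) =
     bind_pmf (sag_dist q W x0 t) (\<lambda>x. map_pmf (sag_update q x) (choice_pmf W))"

end

theory Submission
  imports Defs
begin

lemma integrable_finite_pmf[simp]:
  fixes f :: "'a::finite \<Rightarrow> real"
  shows "integrable (measure_pmf M) f"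
  by (rule integrable_measure_pmf_finite) (rule finite_subset[OF subset_UNIV], simp)

lemma pmf_row:
  fixes W :: "'i::finite \<Rightarrow> 'i \<Rightarrow> real"
  assumes nn: "\<And>i j. W i j \<ge> 0" and rs: "\<And>i. (\<Sum>j\<in>UNIV. W i j) = 1"
  shows "pmf (row_pmf W i) j = W i j"
  unfolding row_pmf_def
proof (rule pmf_embed_pmf)
  show "\<And>x. 0 \<le> W i x" by (rule nn)
  have "(\<integral>\<^sup>+ x. ennreal (W i x) \<partial>count_space UNIV) = (\<Sum>x\<in>UNIV. ennreal (W i x))"
    by (rule nn_integral_count_space_finite) simp
  also have "\<dots> = ennreal (\<Sum>x\<in>UNIV. W i x)" by (rule sum_ennreal) (simp add: nn)
  finally show "(\<integral>\<^sup>+ x. ennreal (W i x) \<partial>count_space UNIV) = 1" by (simp add: rs)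
qed

lemma E_row:
  fixes W :: "'i::finite \<Rightarrow> 'i \<Rightarrow> real"
  assumes nn: "\<And>i j. W i j \<ge> 0" and rs: "\<And>i. (\<Sum>j\<in>UNIV. W i j) = 1"
  shows "measure_pmf.expectation (row_pmf W i) \<phi> = (\<Sum>j\<in>UNIV. W i j * \<phi> j)"
  by (subst integral_measure_pmf_real[where A=UNIV]) (auto simp: pmf_row[OF nn rs] mult.commute)

lemma E_comp:
  fixes W :: "'i::finite \<Rightarrow> 'i \<Rightarrow> real"
  assumes nn: "\<And>i j. W i j \<ge> 0" and rs: "\<And>i. (\<Sum>j\<in>UNIV. W i j) = 1"
  shows "measure_pmf.expectation (choice_pmf W) (\<lambda>J. \<phi> (J i)) = (\<Sum>j\<in>UNIV. W i j * \<phi> j)"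
proof -
  have "measure_pmf.expectation (choice_pmf W) (\<lambda>J. \<phi> (J i))
      = measure_pmf.expectation (map_pmf (\<lambda>J. J i) (choice_pmf W)) \<phi>" by simp
  also have "map_pmf (\<lambda>J. J i) (choice_pmf W) = row_pmf W i"
    unfolding choice_pmf_def by (subst Pi_pmf_component) auto
  finally show ?thesis using E_row[OF nn rs] by simp
qed

lemma E_pair_nonneg:
  fixes W :: "'i::finite \<Rightarrow> 'i \<Rightarrow> real" and g h :: "'i \<Rightarrow> real"
  assumes nn: "\<And>i j. W i j \<ge> 0" and rs: "\<And>i. (\<Sum>j\<in>UNIV. W i j) = 1"
    and ik: "i \<noteq> k" and g0: "\<And>v. g v \<ge> 0" and h0: "\<And>v. h v \<ge> 0"
  shows "measure_pmf.expectation (choice_pmf W) (\<lambda>J. g (J i) * h (J k))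
         = measure_pmf.expectation (choice_pmf W) (\<lambda>J. g (J i)) * measure_pmf.expectation (choice_pmf W) (\<lambda>J. h (J k))"
proof -
  define f where "f = (\<lambda>l v. if l = i then g v else if l = k then h v else (1::real))"
  have pr: "(\<Prod>l\<in>UNIV. f l (J l)) = g (J i) * h (J k)" for J :: "'i \<Rightarrow> 'i"
  proof -
    have "(\<Prod>l\<in>UNIV. f l (J l)) = f i (J i) * (\<Prod>l\<in>UNIV - {i}. f l (J l))"
      by (rule prod.remove) auto
    also have "(\<Prod>l\<in>UNIV - {i}. f l (J l)) = f k (J k) * (\<Prod>l\<in>UNIV - {i} - {k}. f l (J l))"
      using ik by (intro prod.remove) auto
    also have "(\<Prod>l\<in>UNIV - {i} - {k}. f l (J l)) = 1"
      by (rule prod.neutral) (auto simp: f_def)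
    finally show ?thesis using ik by (simp add: f_def)
  qed
  have "measure_pmf.expectation (choice_pmf W) (\<lambda>J. \<Prod>l\<in>UNIV. f l (J l))
     = (\<Prod>l\<in>UNIV. measure_pmf.expectation (row_pmf W l) (\<lambda>v. f l v))"
    unfolding choice_pmf_def
    by (rule expectation_prod_Pi_pmf) (auto simp: f_def g0 h0)
  also have "\<dots> = measure_pmf.expectation (row_pmf W i) (\<lambda>v. f i v) *
       (\<Prod>l\<in>UNIV - {i}. measure_pmf.expectation (row_pmf W l) (\<lambda>v. f l v))"
    by (rule prod.remove) auto
  also have "(\<Prod>l\<in>UNIV - {i}. measure_pmf.expectation (row_pmf W l) (\<lambda>v. f l v))
     = measure_pmf.expectation (row_pmf W k) (\<lambda>v. f k v) *
       (\<Prod>l\<in>UNIV - {i} - {k}. measure_pmf.expectation (row_pmf W l) (\<lambda>v. f l v))"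
    using ik by (intro prod.remove) auto
  also have "(\<Prod>l\<in>UNIV - {i} - {k}. measure_pmf.expectation (row_pmf W l) (\<lambda>v. f l v)) = 1"
    by (rule prod.neutral) (auto simp: f_def)
  finally have X: "measure_pmf.expectation (choice_pmf W) (\<lambda>J. \<Prod>l\<in>UNIV. f l (J l)) =
     measure_pmf.expectation (row_pmf W i) (f i) * measure_pmf.expectation (row_pmf W k) (f k)"
    by simp
  have fi: "f i = g" and fk: "f k = h" using ik by (auto simp: f_def)
  from X have "measure_pmf.expectation (choice_pmf W) (\<lambda>J. g (J i) * h (J k)) =
     measure_pmf.expectation (row_pmf W i) g * measure_pmf.expectation (row_pmf W k) h"
    by (simp only: pr fi fk)
  then show ?thesis using E_comp[OF nn rs, where \<phi>=g and i=i] E_comp[OF nn rs, where \<phi>=h and i=k] E_row[OF nn rs] by simp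
qed

lemma E_pair:
  fixes W :: "'i::finite \<Rightarrow> 'i \<Rightarrow> real" and g h :: "'i \<Rightarrow> real"
  assumes nn: "\<And>i j. W i j \<ge> 0" and rs: "\<And>i. (\<Sum>j\<in>UNIV. W i j) = 1"
    and ik: "i \<noteq> k"
  shows "measure_pmf.expectation (choice_pmf W) (\<lambda>J. g (J i) * h (J k))
         = (\<Sum>j\<in>UNIV. W i j * g j) * (\<Sum>j\<in>UNIV. W k j * h j)"
proof -
  define C where "C = (\<Sum>j\<in>UNIV. \<bar>g j\<bar>) + (\<Sum>j\<in>UNIV. \<bar>h j\<bar>)"
  have Cg: "g v + C \<ge> 0" for v
  proof -
    have "\<bar>g v\<bar> \<le> (\<Sum>j\<in>UNIV. \<bar>g j\<bar>)" by (rule member_le_sum) auto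
    moreover have "0 \<le> (\<Sum>j\<in>UNIV. \<bar>h j\<bar>)" by (rule sum_nonneg) auto
    ultimately show ?thesis unfolding C_def by linarith
  qed
  have Ch: "h v + C \<ge> 0" for v
  proof -
    have "\<bar>h v\<bar> \<le> (\<Sum>j\<in>UNIV. \<bar>h j\<bar>)" by (rule member_le_sum) auto
    moreover have "0 \<le> (\<Sum>j\<in>UNIV. \<bar>g j\<bar>)" by (rule sum_nonneg) auto
    ultimately show ?thesis unfolding C_def by linarith
  qed
  let ?E = "measure_pmf.expectation (choice_pmf W)"
  have 1: "?E (\<lambda>J. (g (J i) + C) * (h (J k) + C)) = ?E (\<lambda>J. g (J i) + C) * ?E (\<lambda>J. h (J k) + C)"
    by (rule E_pair_nonneg[OF nn rs ik, where g="\<lambda>v. g v + C" and h="\<lambda>v. h v + C"]) (use Cg Ch in auto)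
  have 2: "?E (\<lambda>J. (g (J i) + C) * (h (J k) + C)) = ?E (\<lambda>J. g (J i) * h (J k)) + C * ?E (\<lambda>J. g (J i)) + C * ?E (\<lambda>J. h (J k)) + C * C"
    by (simp add: algebra_simps)
  have 3: "?E (\<lambda>J. g (J i) + C) = ?E (\<lambda>J. g (J i)) + C" by simp
  have 4: "?E (\<lambda>J. h (J k) + C) = ?E (\<lambda>J. h (J k)) + C" by simp
  from 1 2 3 4 have "?E (\<lambda>J. g (J i) * h (J k)) = ?E (\<lambda>J. g (J i)) * ?E (\<lambda>J. h (J k))"
    by (simp add: algebra_simps)
  then show ?thesis using E_comp[OF nn rs, where \<phi>=g and i=i] E_comp[OF nn rs, where \<phi>=h and i=k] by simp
qed

lemma alg:
  fixes n q c m a0 Sx2 Sxu Su2 :: real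
  assumes n: "n > 0" and q0: "0 < q" and q1: "q < 1" and c: "c = q / (n * (1 - q) + q)"
    and key: "Sx2 - Su2 \<le> 2 * (Sx2 - Sxu)"
  shows "((1-c)*(1-q)^2*m^2 - 2*a0*(1-q)*m + a0^2 + c/n*(1-q)^2*Sx2)
       + ((1-c)*2*(1-q)*m*q/n - 2*a0*q/n) * (n*m)
       + ((1-c)*q^2/n^2) * ((n*m)^2 + (Sx2 - Su2))
       + (c/n*2*q*(1-q)) * Sxu + (c/n*q^2) * Sx2
       \<le> (m - a0)^2 + c * (Sx2 / n - m^2)"
proof -
  have pos: "n * (1 - q) + q > 0" using n q0 q1 by (simp add: add_pos_pos)
  have k: "(1-c)*q = c*n*(1-q)" unfolding c using pos by (simp add: field_simps)
  have g: "(1-c)*q^2/n^2 = c*(1-q)*q/n"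
  proof -
    have "(1-c)*q^2/n^2 = ((1-c)*q)*q/n^2" by (simp add: power2_eq_square)
    also have "\<dots> = c*(1-q)*q/n" unfolding k using n by (simp add: power2_eq_square field_simps)
    finally show ?thesis .
  qed
  define D where "D = Sx2 - Su2"
  define G where "G = Sx2 - Sxu"
  have diff: "((1-c)*(1-q)^2*m^2 - 2*a0*(1-q)*m + a0^2 + c/n*(1-q)^2*Sx2)
       + ((1-c)*2*(1-q)*m*q/n - 2*a0*q/n) * (n*m)
       + (c*(1-q)*q/n) * ((n*m)^2 + D)
       + (c/n*2*q*(1-q)) * Sxu + (c/n*q^2) * Sx2
       - ((m - a0)^2 + c * (Sx2 / n - m^2)) = c*q*(1-q)/n * (D - 2*G)"
    unfolding G_def using n k by (simp add: field_simps power2_eq_square) algebra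
  have "c*q*(1-q)/n * (D - 2*G) \<le> 0"
    using key c pos q0 q1 n unfolding D_def G_def
    by (intro mult_nonneg_nonpos) (auto intro!: divide_nonneg_pos mult_nonneg_nonneg)
  then show ?thesis using diff g unfolding D_def by simp
qed

lemma sum_avg:
  fixes y :: "'i::finite \<Rightarrow> real"
  shows "(\<Sum>i\<in>UNIV. y i) = real CARD('i) * avg y"
  unfolding avg_def by simp

lemma Var_alt:
  fixes y :: "'i::finite \<Rightarrow> real"
  shows "Var y = (\<Sum>i\<in>UNIV. (y i)^2) / real CARD('i) - (avg y)^2"
proof -
  have "(\<Sum>i\<in>UNIV. (y i - avg y)^2) = (\<Sum>i\<in>UNIV. (y i)^2 - 2 * avg y * y i + (avg y)^2)"
    by (intro sum.cong) (auto simp: power2_diff algebra_simps)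
  also have "\<dots> = (\<Sum>i\<in>UNIV. (y i)^2) - 2 * avg y * (\<Sum>i\<in>UNIV. y i) + real CARD('i) * (avg y)^2"
    by (simp add: sum.distrib sum_subtractf sum_distrib_left)
  also have "\<dots> = (\<Sum>i\<in>UNIV. (y i)^2) - real CARD('i) * (avg y)^2"
    by (simp add: sum_avg power2_eq_square)
  finally show ?thesis unfolding Var_def by (simp add: field_simps)
qed

lemma Var_nonneg: "Var (y :: 'i::finite \<Rightarrow> real) \<ge> 0"
  unfolding Var_def by (intro divide_nonneg_nonneg sum_nonneg) auto

lemma step:
  fixes q :: real and W :: "'i::finite \<Rightarrow> 'i \<Rightarrow> real" and x :: "'i \<Rightarrow> real"
  assumes q0: "0 < q" and q1: "q < 1"
    and nn: "\<And>i j. W i j \<ge> 0"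
    and rs: "\<And>i. (\<Sum>j\<in>UNIV. W i j) = 1"
    and cs: "\<And>j. (\<Sum>i\<in>UNIV. W i j) = 1"
    and c: "c = q / (real CARD('i) * (1 - q) + q)"
  shows "measure_pmf.expectation (choice_pmf W)
           (\<lambda>J. (avg (sag_update q x J) - a0)^2 + c * Var (sag_update q x J))
         \<le> (avg x - a0)^2 + c * Var x"
proof -
  define n where "n = real CARD('i)"
  have n: "n > 0" unfolding n_def by simp
  define m where "m = avg x"
  define P where "P = (\<lambda>J::'i\<Rightarrow>'i. \<Sum>i\<in>UNIV. x (J i))"
  define Q where "Q = (\<lambda>J::'i\<Rightarrow>'i. \<Sum>i\<in>UNIV. x i * x (J i))"
  define R where "R = (\<lambda>J::'i\<Rightarrow>'i. \<Sum>i\<in>UNIV. (x (J i))^2)"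
  define u where "u = (\<lambda>i. \<Sum>j\<in>UNIV. W i j * x j)"
  define v where "v = (\<lambda>i. \<Sum>j\<in>UNIV. W i j * (x j)^2)"
  define Sx2 where "Sx2 = (\<Sum>i\<in>UNIV. (x i)^2)"
  define Sxu where "Sxu = (\<Sum>i\<in>UNIV. x i * u i)"
  define Su2 where "Su2 = (\<Sum>i\<in>UNIV. (u i)^2)"
  let ?E = "measure_pmf.expectation (choice_pmf W)"
  have h1: "avg (sag_update q x J) = (1-q)*m + q/n * P J" for J
  proof -
    have "(\<Sum>i\<in>UNIV. sag_update q x J i) = (1-q) * (\<Sum>i\<in>UNIV. x i) + q * P J"
      unfolding sag_update_def P_def by (simp add: sum.distrib sum_distrib_left)
    then show ?thesis unfolding avg_def m_def n_def using n[unfolded n_def]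
      by (simp add: field_simps)
  qed
  have h2: "(\<Sum>i\<in>UNIV. (sag_update q x J i)^2) = (1-q)^2 * Sx2 + 2*q*(1-q) * Q J + q^2 * R J" for J
  proof -
    have "(\<Sum>i\<in>UNIV. (sag_update q x J i)^2) = (\<Sum>i\<in>UNIV. (1-q)^2 * (x i)^2 + 2*q*(1-q) * (x i * x (J i)) + q^2 * (x (J i))^2)"
      unfolding sag_update_def by (intro sum.cong) (auto simp: power2_eq_square algebra_simps)
    then show ?thesis unfolding Sx2_def Q_def R_def by (simp add: sum.distrib sum_distrib_left)
  qed
  define \<alpha> where "\<alpha> = (1-c)*(1-q)^2*m^2 - 2*a0*(1-q)*m + a0^2 + c/n*(1-q)^2*Sx2"
  define \<beta> where "\<beta> = (1-c)*2*(1-q)*m*q/n - 2*a0*q/n"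
  define \<gamma> where "\<gamma> = (1-c)*q^2/n^2"
  define \<delta> where "\<delta> = c/n*2*q*(1-q)"
  define \<epsilon> where "\<epsilon> = c/n*q^2"
  have pw: "(avg (sag_update q x J) - a0)^2 + c * Var (sag_update q x J)
     = \<alpha> + \<beta> * P J + \<gamma> * (P J)^2 + \<delta> * Q J + \<epsilon> * R J" for J
    unfolding Var_alt h1 h2[unfolded n_def[symmetric]] n_def[symmetric]
      \<alpha>_def \<beta>_def \<gamma>_def \<delta>_def \<epsilon>_def using n
    by (simp add: field_simps power2_eq_square)
  have colsum: "(\<Sum>i\<in>UNIV. \<Sum>j\<in>UNIV. W i j * f j) = (\<Sum>j\<in>UNIV. f j)" for f :: "'i \<Rightarrow> real"
  proof -
    have "(\<Sum>i\<in>UNIV. \<Sum>j\<in>UNIV. W i j * f j) = (\<Sum>j\<in>UNIV. \<Sum>i\<in>UNIV. W i j * f j)"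
      by (rule sum.swap)
    also have "\<dots> = (\<Sum>j\<in>UNIV. (\<Sum>i\<in>UNIV. W i j) * f j)"
      by (simp add: sum_distrib_right)
    finally show ?thesis by (simp add: cs)
  qed
  have EP: "?E P = n * m"
  proof -
    have "?E P = (\<Sum>i\<in>UNIV. ?E (\<lambda>J. x (J i)))" unfolding P_def
      by (rule Bochner_Integration.integral_sum) simp
    also have "\<dots> = (\<Sum>i\<in>UNIV. \<Sum>j\<in>UNIV. W i j * x j)"
      by (intro sum.cong refl) (rule E_comp[OF nn rs])
    also have "\<dots> = n * m" by (simp add: colsum n_def m_def avg_def)
    finally show ?thesis .
  qed
  have EQ: "?E Q = Sxu"
  proof -
    have "?E Q = (\<Sum>i\<in>UNIV. ?E (\<lambda>J. x i * x (J i)))" unfolding Q_def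
      by (rule Bochner_Integration.integral_sum) simp
    also have "\<dots> = Sxu" unfolding Sxu_def u_def
      by (intro sum.cong refl) (simp add: E_comp[OF nn rs, where \<phi>=x])
    finally show ?thesis .
  qed
  have ER: "?E R = Sx2"
  proof -
    have "?E R = (\<Sum>i\<in>UNIV. ?E (\<lambda>J. (x (J i))^2))" unfolding R_def
      by (rule Bochner_Integration.integral_sum) simp
    also have "\<dots> = (\<Sum>i\<in>UNIV. \<Sum>j\<in>UNIV. W i j * (x j)^2)"
      by (intro sum.cong refl) (rule E_comp[OF nn rs, where \<phi>="\<lambda>v. (x v)^2"])
    also have "\<dots> = Sx2" by (simp add: colsum Sx2_def)
    finally show ?thesis .
  qed
  have EP2: "?E (\<lambda>J. (P J)^2) = (n*m)^2 + (Sx2 - Su2)"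
  proof -
    have sq: "(P J)^2 = (\<Sum>i\<in>UNIV. \<Sum>k\<in>UNIV. x (J i) * x (J k))" for J
      unfolding P_def power2_eq_square by (rule sum_product)
    have "?E (\<lambda>J. (P J)^2) = (\<Sum>i\<in>UNIV. ?E (\<lambda>J. \<Sum>k\<in>UNIV. x (J i) * x (J k)))"
      unfolding sq by (rule Bochner_Integration.integral_sum) simp
    also have "\<dots> = (\<Sum>i\<in>UNIV. \<Sum>k\<in>UNIV. ?E (\<lambda>J. x (J i) * x (J k)))"
      by (intro sum.cong refl Bochner_Integration.integral_sum) simp
    also have "\<dots> = (\<Sum>i\<in>UNIV. \<Sum>k\<in>UNIV. u i * u k + (if i = k then v i - u i * u i else 0))"
    proof (intro sum.cong refl)
      fix i k :: 'i
      show "?E (\<lambda>J. x (J i) * x (J k)) = u i * u k + (if i = k then v i - u i * u i else 0)"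
      proof (cases "i = k")
        case True
        then show ?thesis
          using E_comp[OF nn rs, where \<phi>="\<lambda>v. (x v)^2" and i=i]
          by (simp add: v_def power2_eq_square)
      next
        case False
        then show ?thesis using E_pair[OF nn rs False, where g=x and h=x] by (simp add: u_def)
      qed
    qed
    also have "\<dots> = (\<Sum>i\<in>UNIV. u i) * (\<Sum>k\<in>UNIV. u k) + ((\<Sum>i\<in>UNIV. v i) - Su2)"
      by (simp add: sum.distrib sum_product Su2_def power2_eq_square sum_subtractf)
    also have "(\<Sum>i\<in>UNIV. u i) = n * m" unfolding u_def by (simp add: colsum n_def m_def avg_def)
    also have "(\<Sum>i\<in>UNIV. v i) = Sx2" unfolding v_def by (simp add: colsum Sx2_def)
    finally show ?thesis by (simp add: power2_eq_square)
  qed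
  have key: "Sx2 - Su2 \<le> 2 * (Sx2 - Sxu)"
  proof -
    have "0 \<le> (\<Sum>i\<in>UNIV. (x i - u i)^2)" by (rule sum_nonneg) auto
    also have "\<dots> = Sx2 - 2 * Sxu + Su2" unfolding Sx2_def Sxu_def Su2_def
      by (simp add: power2_diff sum.distrib sum_subtractf sum_distrib_left mult.assoc)
    finally show ?thesis by simp
  qed
  have "?E (\<lambda>J. (avg (sag_update q x J) - a0)^2 + c * Var (sag_update q x J))
     = ?E (\<lambda>J. \<alpha> + \<beta> * P J + \<gamma> * (P J)^2 + \<delta> * Q J + \<epsilon> * R J)"
    by (simp only: pw)
  also have "\<dots> = \<alpha> + \<beta> * ?E P + \<gamma> * ?E (\<lambda>J. (P J)^2) + \<delta> * ?E Q + \<epsilon> * ?E R"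
    by simp
  also have "\<dots> = \<alpha> + \<beta> * (n*m) + \<gamma> * ((n*m)^2 + (Sx2 - Su2)) + \<delta> * Sxu + \<epsilon> * Sx2"
    by (simp only: EP EP2 EQ ER)
  also have "\<dots> \<le> (m - a0)^2 + c * (Sx2 / n - m^2)"
    unfolding \<alpha>_def \<beta>_def \<gamma>_def \<delta>_def \<epsilon>_def
    by (rule alg[OF n q0 q1 c[folded n_def] key])
  also have "\<dots> = (avg x - a0)^2 + c * Var x"
    by (simp add: Var_alt m_def Sx2_def n_def)
  finally show ?thesis .
qed

theorem mainTheorem12:
  fixes q :: real and W :: "'i::finite \<Rightarrow> 'i \<Rightarrow> real" and x0 :: "'i \<Rightarrow> real" and t :: nat
  assumes "0 < q" and "q < 1"
    and "\<And>i j. W i j \<ge> 0"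
    and "\<And>i. (\<Sum>j\<in>UNIV. W i j) = 1"
    and "\<And>j. (\<Sum>i\<in>UNIV. W i j) = 1"
  shows "measure_pmf.expectation (sag_dist q W x0 t) (\<lambda>x. (avg x - avg x0)^2)
           \<le> q / (real CARD('i) * (1 - q) + q) * Var x0"
proof -
  define c where "c = q / (real CARD('i) * (1 - q) + q)"
  have pos: "real CARD('i) * (1 - q) + q > 0" using assms(1,2)
    by (intro add_nonneg_pos mult_nonneg_nonneg) auto
  have c0: "c \<ge> 0" unfolding c_def using pos assms(1) by simp
  define \<Phi> where "\<Phi> = (\<lambda>x::'i\<Rightarrow>real. (avg x - avg x0)^2 + c * Var x)"
  have \<Phi>0: "\<Phi> x \<ge> 0" for x unfolding \<Phi>_def using c0 Var_nonneg[of x] by simp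
  have main: "(\<integral>\<^sup>+x. ennreal (\<Phi> x) \<partial>measure_pmf (sag_dist q W x0 s)) \<le> ennreal (c * Var x0)" for s
  proof (induction s)
    case 0
    then show ?case by (simp add: \<Phi>_def)
  next
    case (Suc s)
    have inner: "(\<integral>\<^sup>+y. ennreal (\<Phi> y) \<partial>measure_pmf (map_pmf (sag_update q x) (choice_pmf W))) \<le> ennreal (\<Phi> x)" for x
    proof -
      have "(\<integral>\<^sup>+y. ennreal (\<Phi> y) \<partial>measure_pmf (map_pmf (sag_update q x) (choice_pmf W)))
          = (\<integral>\<^sup>+J. ennreal (\<Phi> (sag_update q x J)) \<partial>measure_pmf (choice_pmf W))"
        by simp
      also have "\<dots> = ennreal (measure_pmf.expectation (choice_pmf W) (\<lambda>J. \<Phi> (sag_update q x J)))"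
        by (rule nn_integral_eq_integral) (auto simp: \<Phi>0)
      also have "\<dots> \<le> ennreal (\<Phi> x)"
        unfolding \<Phi>_def
        by (rule ennreal_leI, rule step[OF assms]) (simp add: c_def)
      finally show ?thesis .
    qed
    have "(\<integral>\<^sup>+x. ennreal (\<Phi> x) \<partial>measure_pmf (sag_dist q W x0 (Suc s)))
       = (\<integral>\<^sup>+x. (\<integral>\<^sup>+y. ennreal (\<Phi> y) \<partial>measure_pmf (map_pmf (sag_update q x) (choice_pmf W))) \<partial>measure_pmf (sag_dist q W x0 s))"
      by simp
    also have "\<dots> \<le> (\<integral>\<^sup>+x. ennreal (\<Phi> x) \<partial>measure_pmf (sag_dist q W x0 s))"
      by (rule nn_integral_mono) (rule inner)
    also have "\<dots> \<le> ennreal (c * Var x0)" by (rule Suc.IH)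
    finally show ?case .
  qed
  have "(\<integral>\<^sup>+x. ennreal ((avg x - avg x0)^2) \<partial>measure_pmf (sag_dist q W x0 t))
      \<le> (\<integral>\<^sup>+x. ennreal (\<Phi> x) \<partial>measure_pmf (sag_dist q W x0 t))"
    by (rule nn_integral_mono, rule ennreal_leI) (simp add: \<Phi>_def c0 Var_nonneg)
  also have "\<dots> \<le> ennreal (c * Var x0)" by (rule main)
  finally have "measure_pmf.expectation (sag_dist q W x0 t) (\<lambda>x. (avg x - avg x0)^2) \<le> c * Var x0"
    by (intro integral_real_bounded) (simp_all add: c0 Var_nonneg)
  then show ?thesis unfolding c_def .
qed

end
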